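(* Let $\psi\in\Psi$ satisfy $\limsup_{t\to\infty}\frac{\psi(2t)}{\psi(t)}<2$. If $0\le x\in M_\psi$, then there exists a constant $c(x)\in\mathbb{N}$ such that $n_x\big(\frac{\psi(t)}{t}\big)\le c(x)t$ for every sufficiently large $t$.
   Context: $\Psi$ is the class of concave increasing functions $\psi$ on $[0,\infty)$ with $\psi(\infty)=\infty$, $\psi(t)=O(t)$ as $t\to0$, $\psi(t)=o(t)$ as $t\to\infty$. For bounded measurable $x$ on $(0,\infty)$, $n_x(\lambda)=m(\{s:|x(s)|>\lambda\})$ and $x^*$ is the nonincreasing right-continuous rearrangement of $|x|$. $M_\psi$ is the space of bounded measurable $x$ with $\sup_{t>0}\frac1{\psi(t)}\int_0^tx^*(s)ds<\infty$. *)

theory Defs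
  imports "HOL-Analysis.Analysis" "HOL-Library.Landau_Symbols"
begin

definition Psi_class :: "(real \<Rightarrow> real) set" where
  "Psi_class = {\<psi>. concave_on {0..} \<psi> \<and> mono_on {0..} \<psi>
      \<and> filterlim \<psi> at_top at_top
      \<and> \<psi> \<in> O[at_right 0](\<lambda>t. t)
      \<and> \<psi> \<in> o[at_top](\<lambda>t. t)}"

definition distr_fun :: "(real \<Rightarrow> real) \<Rightarrow> real \<Rightarrow> ennreal" where
  "distr_fun x l = emeasure lebesgue {s \<in> {0<..}. \<bar>x s\<bar> > l}"

definition rearr :: "(real \<Rightarrow> real) \<Rightarrow> real \<Rightarrow> real" where
  "rearr x t = Inf {l. l \<ge> 0 \<and> distr_fun x l \<le> ennreal t}"

definition bdd_meas :: "(real \<Rightarrow> real) \<Rightarrow> bool" where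
  "bdd_meas x \<longleftrightarrow> x \<in> borel_measurable (restrict_space lebesgue {0<..})
      \<and> (\<exists>B. \<forall>s>0. \<bar>x s\<bar> \<le> B)"

definition M_space :: "(real \<Rightarrow> real) \<Rightarrow> (real \<Rightarrow> real) set" where
  "M_space \<psi> = {x. bdd_meas x \<and>
      (\<exists>C::real. \<forall>t>0. (\<integral>\<^sup>+ s\<in>{0<..<t}. ennreal (rearr x s) \<partial>lebesgue)
                          \<le> ennreal (C * \<psi> t))}"

end

theory Submission
  imports Defs
begin

lemma distr_meas:
  assumes "bdd_meas x"
  shows "{s \<in> {0<..}. \<bar>x s\<bar> > l} \<in> sets lebesgue"
proof -
  have m: "x \<in> borel_measurable (restrict_space lebesgue ({0<..}::real set))"
    using assms by (simp add: bdd_meas_def)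
  have "{s \<in> space (restrict_space lebesgue ({0<..}::real set)). \<bar>x s\<bar> > l} \<in> sets (restrict_space lebesgue ({0<..}::real set))"
    using m by measurable
  then show ?thesis
    by (subst (asm) sets_restrict_space_iff) auto
qed

lemma distr_mono:
  assumes "bdd_meas x" "l \<le> l'"
  shows "distr_fun x l' \<le> distr_fun x l"
  unfolding distr_fun_def
  by (rule emeasure_mono) (use assms distr_meas in auto)

lemma rearr_set_ne:
  assumes "bdd_meas x" "t \<ge> 0"
  shows "\<exists>B\<ge>0. B \<in> {l. l \<ge> 0 \<and> distr_fun x l \<le> ennreal t}"
proof -
  obtain B where B: "\<forall>s>0. \<bar>x s\<bar> \<le> B" using assms by (auto simp: bdd_meas_def)
  have eq: "{s \<in> {0<..}. \<bar>x s\<bar> > max B 0} = {}" using B by force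
  have "distr_fun x (max B 0) = 0" by (simp only: distr_fun_def eq) simp
  then show ?thesis by (intro exI[of _ "max B 0"]) auto
qed

lemma rearr_set_ne':
  assumes "bdd_meas x" "t \<ge> 0"
  shows "{l. l \<ge> 0 \<and> distr_fun x l \<le> ennreal t} \<noteq> {}"
  using rearr_set_ne[OF assms] by blast

lemma rearr_nonneg:
  assumes "bdd_meas x" "t \<ge> 0"
  shows "rearr x t \<ge> 0"
  unfolding rearr_def
  using rearr_set_ne[OF assms] by (intro cInf_greatest) auto

lemma rearr_anti:
  assumes "bdd_meas x" "0 \<le> s" "s \<le> t"
  shows "rearr x t \<le> rearr x s"
  unfolding rearr_def
proof (rule cInf_superset_mono)
  show "{l. 0 \<le> l \<and> distr_fun x l \<le> ennreal s} \<noteq> {}" using rearr_set_ne[OF assms(1,2)] by auto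
  show "bdd_below {l. 0 \<le> l \<and> distr_fun x l \<le> ennreal t}" by (rule bdd_belowI[of _ 0]) auto
  show "{l. 0 \<le> l \<and> distr_fun x l \<le> ennreal s} \<subseteq> {l. 0 \<le> l \<and> distr_fun x l \<le> ennreal t}"
    using assms by (auto intro: order_trans ennreal_leI)
qed

lemma rearr_bound:
  assumes "bdd_meas x" "s > 0"
    and "(\<integral>\<^sup>+ u\<in>{0<..<s}. ennreal (rearr x u) \<partial>lebesgue) \<le> ennreal (C * p)"
    and "p \<ge> 0" "C \<le> C'" "C' \<ge> 0"
  shows "s * rearr x s \<le> C' * p"
proof -
  have "ennreal (rearr x s) * emeasure lebesgue {0<..<s} = (\<integral>\<^sup>+ u. ennreal (rearr x s) * indicator {0<..<s} u \<partial>lebesgue)"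
    by (rule nn_integral_cmult_indicator[symmetric]) auto
  also have "\<dots> \<le> (\<integral>\<^sup>+ u\<in>{0<..<s}. ennreal (rearr x u) \<partial>lebesgue)"
    by (intro nn_integral_mono) (auto simp: indicator_def intro!: ennreal_leI rearr_anti[OF assms(1)])
  also have "\<dots> \<le> ennreal (C * p)" by fact
  also have "\<dots> \<le> ennreal (C' * p)" using assms by (intro ennreal_leI mult_right_mono) auto
  finally have "ennreal (rearr x s * s) \<le> ennreal (C' * p)"
    using assms(2) rearr_nonneg[OF assms(1), of s] by (simp add: ennreal_mult)
  then show ?thesis
    using assms by (subst (asm) ennreal_le_iff) (auto simp: mult.commute intro: mult_nonneg_nonneg)
qed

theorem lemma3p1:
  fixes \<psi> x :: "real \<Rightarrow> real"
  assumes "\<psi> \<in> Psi_class"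
    and "Limsup at_top (\<lambda>t. ereal (\<psi> (2 * t) / \<psi> t)) < 2"
    and "\<forall>s>0. x s \<ge> 0"
    and "x \<in> M_space \<psi>"
  shows "\<exists>c::nat. \<forall>\<^sub>F t in at_top. distr_fun x (\<psi> t / t) \<le> ennreal (real c * t)"
proof -
  have bm: "bdd_meas x" using assms(4) by (simp add: M_space_def)
  obtain C where C: "\<forall>t>0. (\<integral>\<^sup>+ s\<in>{0<..<t}. ennreal (rearr x s) \<partial>lebesgue) \<le> ennreal (C * \<psi> t)"
    using assms(4) by (auto simp: M_space_def)
  define C' where "C' = max C 1"
  have C': "C \<le> C'" "C' \<ge> 1" by (auto simp: C'_def)
  let ?L = "Limsup at_top (\<lambda>t. ereal (\<psi> (2 * t) / \<psi> t))"
  obtain z where z: "?L < z" "z < 2" using assms(2) dense by blast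
  have zfin: "z = ereal (real_of_ereal z)" using z by (cases z) auto
  define q where "q = max (real_of_ereal z) 1"
  have q: "?L < ereal q" "q < 2" "q \<ge> 1"
  proof -
    have "z \<le> ereal q" using zfin by (subst zfin) (auto simp: q_def)
    then show "?L < ereal q" using z by auto
    have "real_of_ereal z < 2" using z(2) by (subst (asm) zfin) simp
    then show "q < 2" by (auto simp: q_def)
  qed (auto simp: q_def)
  have ev1: "\<forall>\<^sub>F t in at_top. \<psi> (2 * t) / \<psi> t < q"
    using Limsup_lessD[OF q(1)] by simp
  have lim: "filterlim \<psi> at_top at_top" using assms(1) by (simp add: Psi_class_def)
  have ev2: "\<forall>\<^sub>F t in at_top. \<psi> t > 0"
    using lim by (simp add: filterlim_at_top_dense)
  obtain T0 where T0: "\<And>t. t \<ge> T0 \<Longrightarrow> \<psi> (2 * t) / \<psi> t < q \<and> \<psi> t > 0"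
    using eventually_conj[OF ev1 ev2] by (auto simp: eventually_at_top_linorder)
  define T where "T = max T0 1"
  have T: "\<And>t. t \<ge> T \<Longrightarrow> \<psi> (2 * t) < q * \<psi> t \<and> \<psi> t > 0" "T \<ge> 1"
  proof -
    fix t assume "t \<ge> T"
    then have "t \<ge> T0" by (simp add: T_def)
    from T0[OF this] show "\<psi> (2 * t) < q * \<psi> t \<and> \<psi> t > 0"
      by (simp add: divide_less_eq mult.commute)
  qed (simp add: T_def)
  have iter: "\<psi> (2 ^ k * t) \<le> q ^ k * \<psi> t" if "t \<ge> T" for k t
  proof (induction k)
    case 0 then show ?case by simp
  next
    case (Suc k)
    have "1 * t \<le> 2 ^ k * t" by (rule mult_right_mono) (use that T(2) in auto)
    then have "2 ^ k * t \<ge> T" using that by simp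
    then have "\<psi> (2 * (2 ^ k * t)) < q * \<psi> (2 ^ k * t)" using T(1) by blast
    also have "\<dots> \<le> q * (q ^ k * \<psi> t)" using Suc q(3) by (intro mult_left_mono) auto
    finally show ?case by (simp add: mult.assoc)
  qed
  have "1 < 2 / q" using q by auto
  from real_arch_pow[OF this] obtain k where k: "C' < (2 / q) ^ k" by blast
  have k': "C' * q ^ k < 2 ^ k"
    using k q by (simp add: power_divide pos_less_divide_eq)
  show ?thesis
  proof (intro exI[of _ "2 ^ k"], unfold eventually_at_top_linorder, intro exI[of _ T] allI impI)
    fix t assume t: "t \<ge> T"
    have tpos: "t > 0" using t T(2) by simp
    define s where "s = 2 ^ k * t"
    have spos: "s > 0" using tpos by (simp add: s_def)
    have "1 * t \<le> 2 ^ k * t" by (rule mult_right_mono) (use tpos in auto)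
    then have "s \<ge> T" using t unfolding s_def by simp
    then have psis: "\<psi> s > 0" using T(1) by blast
    have psit: "\<psi> t > 0" using T(1) t by blast
    have "s * rearr x s \<le> C' * \<psi> s"
      using rearr_bound[OF bm spos C[rule_format, OF spos] _ C'(1)] psis C' by simp
    also have "\<dots> \<le> C' * (q ^ k * \<psi> t)"
      using iter[OF t, of k] C' by (simp add: s_def)
    also have "\<dots> < 2 ^ k * \<psi> t" using k' psit by (simp add: mult.assoc[symmetric])
    finally have "2 ^ k * (t * rearr x s) < 2 ^ k * \<psi> t"
      by (simp add: s_def mult.assoc)
    then have "t * rearr x s < \<psi> t" by simp
    then have "rearr x s < \<psi> t / t"
      using tpos by (simp add: pos_less_divide_eq mult.commute)
    then have lt: "Inf {l. l \<ge> 0 \<and> distr_fun x l \<le> ennreal s} < \<psi> t / t"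
      by (simp add: rearr_def)
    have ne: "{l. l \<ge> 0 \<and> distr_fun x l \<le> ennreal s} \<noteq> {}"
      using rearr_set_ne'[OF bm less_imp_le[OF spos]] .
    obtain l where l: "l \<in> {l. l \<ge> 0 \<and> distr_fun x l \<le> ennreal s}" "l < \<psi> t / t"
      using cInf_lessD[OF ne lt] by blast
    have "distr_fun x (\<psi> t / t) \<le> distr_fun x l" using l(2) by (intro distr_mono[OF bm]) auto
    also have "\<dots> \<le> ennreal s" using l(1) by auto
    finally show "distr_fun x (\<psi> t / t) \<le> ennreal (real (2 ^ k) * t)" by (simp add: s_def)
  qed
qed

end
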